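(* Let $K_1,K_{-1}\subseteq[N]$ be disjoint, $x_{\pm1}=\mathbb{1}_{K_1}-\mathbb{1}_{K_{-1}}$, and $A\in\mathbb{R}^{m\times N}$. The following are equivalent: (i) $x_{\pm1}$ is the unique solution of $\min\|x\|_1$ subject to $Ax=Ax_{\pm1}$ and $x\in[-1,1]^N$; (ii) $\ker(A)\cap N_K\cap H_{K_1,K_{-1}}=\{0\}$, where $K=K_1\cup K_{-1}$.
   Context: $\mathbb{1}_S$ has entries $1$ on $S$ and $0$ elsewhere; $K^C=[N]\setminus K$; $w_S$ agrees with $w$ on $S$ and is zero elsewhere. $N_K=\{w\in\mathbb{R}^N:\|w_K\|_1\ge\|w_{K^C}\|_1\}$ and $H_{K_1,K_{-1}}=\{w\in\mathbb{R}^N: w_i\le 0\text{ for } i\in K_1,\ w_i\ge0\text{ for } i\in K_{-1}\}$. "Unique solution" means unique minimizer. *)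

theory Defs
  imports "HOL-Analysis.Analysis"
begin

definition l1norm :: "real ^ 'n \<Rightarrow> real" where
  "l1norm x = (\<Sum>i\<in>UNIV. \<bar>x $ i\<bar>)"

definition indicator_vec :: "'n set \<Rightarrow> real ^ 'n" where
  "indicator_vec S = (\<chi> i. if i \<in> S then 1 else 0)"

definition restrict_vec :: "'n set \<Rightarrow> real ^ 'n \<Rightarrow> real ^ 'n" where
  "restrict_vec S w = (\<chi> i. if i \<in> S then w $ i else 0)"

definition nullspace_prop_set :: "'n set \<Rightarrow> (real ^ 'n) set" where
  "nullspace_prop_set K = {w. l1norm (restrict_vec K w) \<ge> l1norm (restrict_vec (- K) w)}"

definition sign_set :: "'n set \<Rightarrow> 'n set \<Rightarrow> (real ^ 'n) set" where
  "sign_set K1 Km1 = {w. (\<forall>i\<in>K1. w $ i \<le> 0) \<and> (\<forall>i\<in>Km1. w $ i \<ge> 0)}"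

definition matrix_kernel :: "real ^ 'n ^ 'm \<Rightarrow> (real ^ 'n) set" where
  "matrix_kernel A = {w. A *v w = 0}"

definition unique_box_l1_solution :: "real ^ 'n ^ 'm \<Rightarrow> real ^ 'n \<Rightarrow> bool" where
  "unique_box_l1_solution A x0 \<longleftrightarrow>
     (let F = {x. A *v x = A *v x0 \<and> (\<forall>i. -1 \<le> x $ i \<and> x $ i \<le> 1)} in
      x0 \<in> F \<and> (\<forall>x\<in>F. x \<noteq> x0 \<longrightarrow> l1norm x0 < l1norm x))"

end

theory Submission
  imports Defs
begin

lemma l1_restrict: "l1norm (restrict_vec S w) = (\<Sum>i\<in>UNIV. if i \<in> S then \<bar>w $ i\<bar> else 0)"
  unfolding l1norm_def restrict_vec_def by (intro sum.cong) auto

lemma r0: "restrict_vec S (0::real^'n) = 0" by (simp add: restrict_vec_def vec_eq_iff)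

lemma x0_comp:
  assumes "K1 \<inter> Km1 = {}"
  shows "(indicator_vec K1 - indicator_vec Km1) $ i = (if i \<in> K1 then 1 else if i \<in> Km1 then -1 else (0::real))"
  using assms unfolding indicator_vec_def by auto

theorem theorem3p2:
  fixes A :: "real ^ 'n ^ 'm" and K1 Km1 :: "'n set"
  assumes "K1 \<inter> Km1 = {}"
  shows "unique_box_l1_solution A (indicator_vec K1 - indicator_vec Km1) \<longleftrightarrow>
         matrix_kernel A \<inter> nullspace_prop_set (K1 \<union> Km1) \<inter> sign_set K1 Km1 = {0}"
proof -
  define x0 where "x0 = indicator_vec K1 - indicator_vec Km1"
  define K where "K = K1 \<union> Km1"
  have x0c: "\<And>i. x0 $ i = (if i \<in> K1 then 1 else if i \<in> Km1 then -1 else 0)"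
    unfolding x0_def using x0_comp[OF assms] by simp
  have l1x0: "l1norm x0 = (\<Sum>i\<in>UNIV. if i \<in> K then 1 else 0)"
    unfolding l1norm_def K_def by (intro sum.cong) (auto simp: x0c)
  have x0box: "\<forall>i. -1 \<le> x0 $ i \<and> x0 $ i \<le> 1" by (auto simp: x0c)
  have "unique_box_l1_solution A x0 \<longleftrightarrow>
         matrix_kernel A \<inter> nullspace_prop_set K \<inter> sign_set K1 Km1 = {0}"
  proof
    assume U: "unique_box_l1_solution A x0"
    show "matrix_kernel A \<inter> nullspace_prop_set K \<inter> sign_set K1 Km1 = {0}"
    proof (rule ccontr)
      assume "matrix_kernel A \<inter> nullspace_prop_set K \<inter> sign_set K1 Km1 \<noteq> {0}"
      moreover have "0 \<in> matrix_kernel A \<inter> nullspace_prop_set K \<inter> sign_set K1 Km1"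
        by (simp add: matrix_kernel_def nullspace_prop_set_def sign_set_def r0)
      ultimately obtain w where w: "w \<in> matrix_kernel A" "w \<in> nullspace_prop_set K"
        "w \<in> sign_set K1 Km1" "w \<noteq> 0" by blast
      define t where "t = 1 / (1 + l1norm w)"
      have l1pos: "l1norm w \<ge> 0" unfolding l1norm_def by (simp add: sum_nonneg)
      have tpos: "t > 0" using l1pos by (simp add: t_def)
      have wle: "\<bar>w $ i\<bar> \<le> l1norm w" for i
        unfolding l1norm_def by (rule member_le_sum) auto
      have twle: "t * \<bar>w $ i\<bar> \<le> 1" for i
      proof -
        have "t * \<bar>w $ i\<bar> \<le> t * (1 + l1norm w)" using wle[of i] tpos by simp
        also have "\<dots> = 1" using l1pos by (simp add: t_def)
        finally show ?thesis .
      qed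
      define x where "x = x0 + t *\<^sub>R w"
      have Aw: "A *v w = 0" using w(1) by (simp add: matrix_kernel_def)
      have Ax: "A *v x = A *v x0"
        by (simp add: x_def matrix_vector_right_distrib matrix_vector_mult_scaleR Aw)
      have sg: "\<forall>i\<in>K1. w $ i \<le> 0" "\<forall>i\<in>Km1. w $ i \<ge> 0" using w(3) by (auto simp: sign_set_def)
      have comp: "\<bar>x $ i\<bar> = (if i \<in> K then 1 - t * \<bar>w $ i\<bar> else t * \<bar>w $ i\<bar>)"
        and boxi: "-1 \<le> x $ i \<and> x $ i \<le> 1" for i
      proof -
        have tw: "t * \<bar>w $ i\<bar> \<le> 1" by (rule twle)
        have "\<bar>t * w $ i\<bar> = t * \<bar>w $ i\<bar>" using tpos by (simp add: abs_mult)
        then show "\<bar>x $ i\<bar> = (if i \<in> K then 1 - t * \<bar>w $ i\<bar> else t * \<bar>w $ i\<bar>)"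
          "-1 \<le> x $ i \<and> x $ i \<le> 1"
          using tw sg tpos assms mult_nonneg_nonneg[of t "w$i"] mult_nonneg_nonpos[of t "w$i"]
          by (auto simp: x_def x0c K_def abs_if split: if_splits)
      qed
      have "l1norm x = (\<Sum>i\<in>UNIV. (if i \<in> K then 1 else 0) - t * (if i \<in> K then \<bar>w $ i\<bar> else 0)
              + t * (if i \<in> -K then \<bar>w $ i\<bar> else 0))"
        unfolding l1norm_def by (intro sum.cong) (auto simp: comp)
      also have "\<dots> = l1norm x0 - t * l1norm (restrict_vec K w) + t * l1norm (restrict_vec (-K) w)"
        by (simp add: sum.distrib sum_subtractf sum_distrib_left l1_restrict l1x0)
      also have "\<dots> \<le> l1norm x0"
        using w(2) tpos by (simp add: nullspace_prop_set_def)
      finally have le: "l1norm x \<le> l1norm x0" .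
      have "x \<noteq> x0" using tpos w(4) by (simp add: x_def)
      with U Ax boxi le show False
        unfolding unique_box_l1_solution_def Let_def by force
    qed
  next
    assume H: "matrix_kernel A \<inter> nullspace_prop_set K \<inter> sign_set K1 Km1 = {0}"
    show "unique_box_l1_solution A x0"
      unfolding unique_box_l1_solution_def Let_def
    proof (intro conjI ballI impI)
      show "x0 \<in> {x. A *v x = A *v x0 \<and> (\<forall>i. - 1 \<le> x $ i \<and> x $ i \<le> 1)}" using x0box by simp
    next
      fix x assume xF: "x \<in> {x. A *v x = A *v x0 \<and> (\<forall>i. - 1 \<le> x $ i \<and> x $ i \<le> 1)}"
        and ne: "x \<noteq> x0"
      define w where "w = x - x0"
      have wne: "w \<noteq> 0" using ne by (simp add: w_def)
      have bx: "-1 \<le> x $ i \<and> x $ i \<le> 1" for i using xF by auto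
      have wk: "w \<in> matrix_kernel A" using xF
        by (simp add: matrix_kernel_def w_def matrix_vector_mult_diff_distrib)
      have ws: "w \<in> sign_set K1 Km1"
        using bx assms unfolding sign_set_def w_def by (auto simp: x0c)
      have comp: "\<bar>x $ i\<bar> \<ge> (if i \<in> K then 1 - \<bar>w $ i\<bar> else \<bar>w $ i\<bar>)" for i
        using bx[of i] assms by (auto simp: w_def x0c K_def abs_if)
      show "l1norm x0 < l1norm x"
      proof (rule ccontr)
        assume "\<not> l1norm x0 < l1norm x"
        hence le: "l1norm x \<le> l1norm x0" by simp
        have "(\<Sum>i\<in>UNIV. (if i \<in> K then 1 else 0) - (if i \<in> K then \<bar>w $ i\<bar> else 0)
              + (if i \<in> -K then \<bar>w $ i\<bar> else 0)) \<le> l1norm x"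
          unfolding l1norm_def
        proof (intro sum_mono)
          fix i show "(if i \<in> K then 1 else 0) - (if i \<in> K then \<bar>w $ i\<bar> else 0)
              + (if i \<in> -K then \<bar>w $ i\<bar> else 0) \<le> \<bar>x $ i\<bar>"
            using comp[of i] by (cases "i \<in> K") auto
        qed
        also have "(\<Sum>i\<in>UNIV. (if i \<in> K then 1 else 0) - (if i \<in> K then \<bar>w $ i\<bar> else 0)
              + (if i \<in> -K then \<bar>w $ i\<bar> else 0)) = l1norm x0 - l1norm (restrict_vec K w) + l1norm (restrict_vec (-K) w)"
          by (simp add: sum.distrib sum_subtractf l1_restrict l1x0)
        finally have "w \<in> nullspace_prop_set K" using le by (simp add: nullspace_prop_set_def)
        with wk ws H wne show False by blast
      qed
    qed
  qed
  thus ?thesis by (simp add: x0_def K_def)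
qed

end
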